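(* Let $\tilde X=J_n^*XJ_n\in S_{n+1}$ with $X\in M_n$ real or complex (of arbitrary rank), and let $k_n$ be any invertible $n\times n$ matrix with $K_n=k_nk_n^*$ (e.g. the Cholesky factor). Then the Moore–Penrose inverse of $\tilde X$ lies in $S_{n+1}$ and equals $\phi(X^\oplus)=J_n^*X^\oplus J_n$, where $X^\oplus:=(k_n^{-1})^*(k_n^*Xk_n)^+k_n^{-1}$ is the $\circ$-Moore–Penrose inverse of $X$; that is, \[\tilde X^+=J_n^*(k_n^{-1})^*(k_n^*Xk_n)^+k_n^{-1}J_n,\] and also \[\tilde X^+=J_n^*\Big(\lim_{\delta\downarrow0}(X^*K_nXK_n+\delta I_n)^{-1}X^*\Big)J_n,\] where the limit is over real $\delta>0$.
   Context: Matrices are over $\mathbb R$ or $\mathbb C$; $A^*$ denotes conjugate transpose and $A^+$ the Moore–Penrose inverse (the unique $B$ with $ABA=A$, $BAB=B$, $(AB)^*=AB$, $(BA)^*=BA$). $M_n$ is the set of $n\times n$ matrices; $S_{n}$ is the set of $n\times n$ matrices all of whose row sums and column sums are zero. $\mathbf 1$ is the all-ones column vector, $J_n:=[I_n\mid -\mathbf 1]$ (an $n\times(n+1)$ matrix), $K_n:=J_nJ_n^*=I_n+\mathbf 1\mathbf 1^*$ (symmetric positive definite), $\phi(X):=J_n^*XJ_n$. On $M_n$, $X\circ Y:=XK_nY$, and a $\circ$-Moore–Penrose inverse of $X$ is a $Y\in M_n$ with $X\circ Y\circ X=X$, $Y\circ X\circ Y=Y$, $(X\circ Y)^*=X\circ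 Y$, $(Y\circ X)^*=Y\circ X$. *)

theory Defs
  imports "HOL-Analysis.Analysis" "Jordan_Normal_Form.Matrix" "Jordan_Normal_Form.Conjugate"
begin

definition cadj :: "'a::conjugate mat \<Rightarrow> 'a mat" where
  "cadj A = mat (dim_col A) (dim_row A) (\<lambda>(i,j). conjugate (A $$ (j,i)))"

definition is_mp_inverse :: "'a::{conjugate,semiring_0} mat \<Rightarrow> 'a mat \<Rightarrow> bool" where
  "is_mp_inverse A B \<longleftrightarrow> B \<in> carrier_mat (dim_col A) (dim_row A) \<and>
     A * B * A = A \<and> B * A * B = B \<and> cadj (A * B) = A * B \<and> cadj (B * A) = B * A"

definition mp_inverse :: "'a::{conjugate,semiring_0} mat \<Rightarrow> 'a mat" where
  "mp_inverse A = (THE B. is_mp_inverse A B)"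

text \<open>Ordinary inverse of a square matrix (meaningful when it is invertible).\<close>
definition minv :: "'a::semiring_1 mat \<Rightarrow> 'a mat" where
  "minv A = (THE B. B \<in> carrier_mat (dim_row A) (dim_row A) \<and>
                    A * B = 1\<^sub>m (dim_row A) \<and> B * A = 1\<^sub>m (dim_row A))"

definition Jmat :: "nat \<Rightarrow> 'a::ring_1 mat" where
  "Jmat n = mat n (Suc n) (\<lambda>(i,j). if j = n then - 1 else if i = j then 1 else 0)"

definition Kmat :: "nat \<Rightarrow> 'a::{ring_1,conjugate} mat" where
  "Kmat n = Jmat n * cadj (Jmat n)"

definition Smats :: "nat \<Rightarrow> 'a::comm_monoid_add mat set" where
  "Smats m = {A \<in> carrier_mat m m. (\<forall>i<m. (\<Sum>j<m. A $$ (i,j)) = 0) \<and>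
                                   (\<forall>j<m. (\<Sum>i<m. A $$ (i,j)) = 0)}"

definition circ :: "nat \<Rightarrow> 'a::{ring_1,conjugate} mat \<Rightarrow> 'a mat \<Rightarrow> 'a mat" where
  "circ n X Y = X * Kmat n * Y"

definition is_circ_mp_inverse :: "nat \<Rightarrow> 'a::{ring_1,conjugate} mat \<Rightarrow> 'a mat \<Rightarrow> bool" where
  "is_circ_mp_inverse n X Y \<longleftrightarrow> Y \<in> carrier_mat n n \<and>
     circ n (circ n X Y) X = X \<and> circ n (circ n Y X) Y = Y \<and>
     cadj (circ n X Y) = circ n X Y \<and> cadj (circ n Y X) = circ n Y X"

end

theory Submission
  imports Defs "Jordan_Normal_Form.Gauss_Jordan_Elimination" "Jordan_Normal_Form.Determinant"
begin


lemma assoc_dim[simp]: "dim_col A = dim_row B \<Longrightarrow> dim_col B = dim_row C \<Longrightarrow>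
  (A::'a::semiring_0 mat) * B * C = A * (B * C)"
  by (rule assoc_mult_mat[of A "dim_row A" "dim_col A" B "dim_col B" C "dim_col C"], auto)

lemma distl_dim: "dim_col A = dim_row B \<Longrightarrow> dim_row B = dim_row C \<Longrightarrow> dim_col B = dim_col C \<Longrightarrow>
  (A::'a::semiring_0 mat) * (B + C) = A * B + A * C"
  by (rule mult_add_distrib_mat[of A "dim_row A" "dim_col A" _ "dim_col B"], auto)

lemma distr_dim: "dim_col A = dim_row C \<Longrightarrow> dim_row A = dim_row B \<Longrightarrow> dim_col A = dim_col B \<Longrightarrow>
  ((A::'a::semiring_0 mat) + B) * C = A * C + B * C"
  by (rule add_mult_distrib_mat[of A "dim_row A" "dim_col A"], auto)

lemma smult_l_dim[simp]: "dim_col A = dim_row B \<Longrightarrow> (k \<cdot>\<^sub>m (A::'a::comm_semiring_0 mat)) * B = k \<cdot>\<^sub>m (A * B)"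
  by (rule eq_matI, auto simp: scalar_prod_def sum_distrib_left ac_simps)

lemma smult_r_dim[simp]: "dim_col A = dim_row B \<Longrightarrow> (A::'a::comm_semiring_0 mat) * (k \<cdot>\<^sub>m B) = k \<cdot>\<^sub>m (A * B)"
  by (rule eq_matI, auto simp: scalar_prod_def sum_distrib_left ac_simps)

lemma conj_one[simp]: "conjugate (1::'a::conjugatable_field) = 1"
proof -
  have "conjugate (1 * conjugate (1::'a)) = conjugate 1 * conjugate (conjugate 1)"
    by (rule conjugate_dist_mul)
  thus ?thesis by simp
qed

lemma conj_minus_one[simp]: "conjugate (-1::'a::conjugatable_field) = -1"
  by (simp add: conjugate_neg)

lemma cadj_dims[simp]: "dim_row (cadj A) = dim_col A" "dim_col (cadj A) = dim_row A"
  by (auto simp: cadj_def)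

lemma cadj_index[simp]: "i < dim_col A \<Longrightarrow> j < dim_row A \<Longrightarrow> cadj A $$ (i,j) = conjugate (A $$ (j,i))"
  unfolding cadj_def by simp

lemma cadj_carrier[simp]: "A \<in> carrier_mat m n \<Longrightarrow> cadj A \<in> carrier_mat n m"
  unfolding carrier_mat_def by simp

lemma cadj_cadj[simp]: "cadj (cadj A) = A"
  by (rule eq_matI, auto)

lemma cadj_mult: "dim_col A = dim_row B \<Longrightarrow>
   cadj ((A::'a::conjugatable_field mat) * B) = cadj B * cadj A"
proof (rule eq_matI)
  fix i j assume "dim_col A = dim_row B" "i < dim_row (cadj B * cadj A)" "j < dim_col (cadj B * cadj A)"
  thus "cadj (A * B) $$ (i, j) = (cadj B * cadj A) $$ (i, j)"
    by (simp add: scalar_prod_def sum_conjugate conjugate_dist_mul mult.commute)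
qed auto

lemma cadj_add: "dim_row A = dim_row B \<Longrightarrow> dim_col A = dim_col B \<Longrightarrow>
   cadj ((A::'a::conjugatable_ring mat) + B) = cadj A + cadj B"
  by (rule eq_matI, auto simp: conjugate_dist_add)

lemma cadj_smult: "cadj (k \<cdot>\<^sub>m (A::'a::conjugatable_ring mat)) = conjugate k \<cdot>\<^sub>m cadj A"
  by (rule eq_matI, auto simp: conjugate_dist_mul)

lemma cadj_one[simp]: "cadj (1\<^sub>m n :: 'a::conjugatable_field mat) = 1\<^sub>m n"
  by (rule eq_matI, auto)

lemma cadj_zero[simp]: "cadj (0\<^sub>m n m :: 'a::conjugatable_field mat) = 0\<^sub>m m n"
  by (rule eq_matI, auto)


lemma diag_MMs:
  fixes M :: "'a::{conjugatable_field, real_normed_field} mat"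
  assumes conj_abs: "\<And>x::'a. x * conjugate x = of_real ((norm x)\<^sup>2)"
    and i: "i < dim_row M"
  shows "(M * cadj M) $$ (i,i) = of_real (\<Sum>j<dim_col M. (norm (M $$ (i,j)))\<^sup>2)"
  using i by (simp add: scalar_prod_def conj_abs of_real_sum atLeast0LessThan del: of_real_power)

lemma diag_MsM:
  fixes M :: "'a::{conjugatable_field, real_normed_field} mat"
  assumes conj_abs: "\<And>x::'a. x * conjugate x = of_real ((norm x)\<^sup>2)"
    and j: "j < dim_col M"
  shows "(cadj M * M) $$ (j,j) = of_real (\<Sum>i<dim_row M. (norm (M $$ (i,j)))\<^sup>2)"
  using j by (simp add: scalar_prod_def conj_abs of_real_sum atLeast0LessThan mult.commute del: of_real_power)

lemma pos_zero:
  fixes D :: "'a::{conjugatable_field, real_normed_field} mat"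
  assumes conj_abs: "\<And>x::'a. x * conjugate x = of_real ((norm x)\<^sup>2)"
    and z: "D * cadj D = 0\<^sub>m (dim_row D) (dim_row D)"
  shows "D = 0\<^sub>m (dim_row D) (dim_col D)"
proof (rule eq_matI)
  fix i j assume i: "i < dim_row (0\<^sub>m (dim_row D) (dim_col D))" and j: "j < dim_col (0\<^sub>m (dim_row D) (dim_col D))"
  hence i: "i < dim_row D" and j: "j < dim_col D" by auto
  have "of_real (\<Sum>j<dim_col D. (norm (D $$ (i,j)))\<^sup>2) = (0::'a)"
    using diag_MMs[OF conj_abs i] z i by (simp del: of_real_power)
  hence "(\<Sum>j<dim_col D. (norm (D $$ (i,j)))\<^sup>2) = 0" by (simp only: of_real_eq_0_iff)
  hence "(norm (D $$ (i,j)))\<^sup>2 = 0"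
    using j by (subst (asm) sum_nonneg_eq_0_iff) auto
  thus "D $$ (i, j) = 0\<^sub>m (dim_row D) (dim_col D) $$ (i, j)" using i j by simp
qed auto


lemma rref_inner:
  fixes C :: "'a::field mat"
  assumes C: "C \<in> carrier_mat n n" and pf: "pivot_fun C f n"
  shows "C * mat n n (\<lambda>(j,i). if f i = j then 1 else 0) * C = C"
proof -
  let ?G = "mat n n (\<lambda>(j,i). if f i = j then (1::'a) else 0)"
  have dC: "dim_row C = n" "dim_col C = n" using C by auto
  note p = pivot_funD[OF dC(1) pf]
  have CG: "C * ?G = mat n n (\<lambda>(a,b). if f b < n \<and> a = b then 1 else 0)"
  proof (rule eq_matI)
    fix a b assume ab: "a < dim_row (mat n n (\<lambda>(a,b). if f b < n \<and> a = b then (1::'a) else 0))"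
      "b < dim_col (mat n n (\<lambda>(a,b). if f b < n \<and> a = b then (1::'a) else 0))"
    hence a: "a < n" and b: "b < n" by auto
    have "(C * ?G) $$ (a,b) = (\<Sum>j = 0..<n. C $$ (a,j) * (if f b = j then 1 else 0))"
      using a b dC by (simp add: scalar_prod_def)
    also have "\<dots> = (if f b < n then C $$ (a, f b) else 0)"
      by (simp add: if_distrib[of "\<lambda>x. _ * x"] sum.delta' cong: if_cong)
    also have "\<dots> = (if f b < n \<and> a = b then 1 else 0)"
      using p(4)[OF b] p(5)[OF b _ a] by auto
    finally show "(C * ?G) $$ (a,b) = mat n n (\<lambda>(a,b). if f b < n \<and> a = b then (1::'a) else 0) $$ (a,b)"
      using a b by simp
  qed (use dC in auto)
  show ?thesis
  proof (rule eq_matI)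
    fix a c assume "a < dim_row C" "c < dim_col C"
    hence a: "a < n" and c: "c < n" using dC by auto
    have "(C * ?G * C) $$ (a,c) = (\<Sum>b = 0..<n. (if f b < n \<and> a = b then 1 else 0) * C $$ (b,c))"
      unfolding CG using a c dC by (simp add: scalar_prod_def)
    also have "\<dots> = (\<Sum>b = 0..<n. if b = a then (if f a < n then C $$ (a,c) else 0) else 0)"
      by (rule sum.cong) auto
    also have "\<dots> = (if f a < n then C $$ (a,c) else 0)"
      using a by simp
    also have "\<dots> = C $$ (a,c)"
      using p(1)[OF a] p(2)[OF a, of c] c by auto
    finally show "(C * ?G * C) $$ (a,c) = C $$ (a,c)" .
  qed (use dC in auto)
qed

lemma inner_inverse:
  fixes A :: "'a::field mat"
  assumes A: "A \<in> carrier_mat n n"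
  shows "\<exists>G \<in> carrier_mat n n. A * G * A = A"
proof -
  obtain C where gj: "gauss_jordan_single A = C" by auto
  note g = gauss_jordan_single[OF A gj]
  from g(4) obtain P Q where CPA: "C = P * A" and P: "P \<in> carrier_mat n n" and Q: "Q \<in> carrier_mat n n"
    and PQ: "P * Q = 1\<^sub>m n" and QP: "Q * P = 1\<^sub>m n" by auto
  from g(3) obtain f where pf: "pivot_fun C f (dim_col C)" unfolding row_echelon_form_def by auto
  have C: "C \<in> carrier_mat n n" using g(2) .
  with pf have pf: "pivot_fun C f n" by auto
  let ?G = "mat n n (\<lambda>(j,i). if f i = j then (1::'a) else 0)"
  have G0: "?G \<in> carrier_mat n n" by auto
  have AQC: "A = Q * C"
    using A P Q QP unfolding CPA by (metis assoc_mult_mat left_mult_one_mat)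
  have PQC: "P * (Q * C) = C"
    using P Q C PQ by (metis assoc_mult_mat left_mult_one_mat)
  have "A * (?G * P) * A = Q * (C * ?G * C)"
    using A P Q C G0 PQ unfolding AQC by (simp add: assoc_mult_mat[of _ n n _ n _ n] PQC)
  also have "\<dots> = A" unfolding rref_inner[OF C pf] AQC ..
  finally show ?thesis using G0 P by (intro bexI[of _ "?G * P"]) auto
qed



lemma distl_minus: "dim_col A = dim_row B \<Longrightarrow> dim_row B = dim_row C \<Longrightarrow> dim_col B = dim_col C \<Longrightarrow>
  (A::'a::comm_ring mat) * (B - C) = A * B - A * C"
  by (rule eq_matI) (auto simp: scalar_prod_def algebra_simps sum_subtractf)

lemma distr_minus: "dim_col A = dim_row C \<Longrightarrow> dim_row A = dim_row B \<Longrightarrow> dim_col A = dim_col B \<Longrightarrow>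
  ((A::'a::comm_ring mat) - B) * C = A * C - B * C"
  by (rule eq_matI) (auto simp: scalar_prod_def algebra_simps sum_subtractf)

lemma conj_diff: "conjugate ((a::'a::conjugatable_ring) - b) = conjugate a - conjugate b"
  by (metis conjugate_dist_add conjugate_neg diff_conv_add_uminus)

lemma cadj_minus: "dim_row A = dim_row B \<Longrightarrow> dim_col A = dim_col B \<Longrightarrow>
   cadj ((A::'a::conjugatable_field mat) - B) = cadj A - cadj B"
  by (rule eq_matI, auto simp: conj_diff)

lemma minus_zero_eq: "dim_row A = dim_row B \<Longrightarrow> dim_col A = dim_col B \<Longrightarrow>
   (A::'a::ab_group_add mat) - B = 0\<^sub>m (dim_row A) (dim_col A) \<Longrightarrow> A = B"
  by (rule eq_matI) (auto simp: mat_eq_iff)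

lemma self_minus: "(A::'a::ab_group_add mat) - A = 0\<^sub>m (dim_row A) (dim_col A)"
  by (rule eq_matI) auto

lemma normal_solve:
  fixes A :: "'a::{conjugatable_field, real_normed_field} mat"
  assumes conj_abs: "\<And>x::'a. x * conjugate x = of_real ((norm x)\<^sup>2)"
    and A: "A \<in> carrier_mat m m"
  shows "\<exists>G \<in> carrier_mat m m. cadj A = cadj A * A * G"
proof -
  have [simp]: "dim_row A = m" "dim_col A = m" using carrier_matD[OF A] by simp_all
  have "cadj A * A \<in> carrier_mat m m" by (intro carrier_matI) simp_all
  then obtain G0 where G0: "G0 \<in> carrier_mat m m" and inn: "cadj A * A * G0 * (cadj A * A) = cadj A * A"
    using inner_inverse[of "cadj A * A" m] by blast
  have [simp]: "dim_row G0 = m" "dim_col G0 = m" using carrier_matD[OF G0] by simp_all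
  define D where "D = cadj A - cadj A * A * G0 * cadj A"
  have [simp]: "dim_row D = m" "dim_col D = m" by (auto simp: D_def)
  have DA: "D * A = 0\<^sub>m m m"
  proof -
    have "D * A = cadj A * A - cadj A * A * G0 * (cadj A * A)"
      unfolding D_def by (simp add: distr_minus)
    also have "\<dots> = 0\<^sub>m m m" unfolding inn using self_minus[of "cadj A * A"] by simp
    finally show ?thesis .
  qed
  have hA: "cadj (cadj A * A) = cadj A * A" by (simp add: cadj_mult)
  have cD: "cadj D = A - A * cadj G0 * (cadj A * A)"
    unfolding D_def by (simp add: cadj_minus cadj_mult)
  have "D * cadj D = D * A - D * A * cadj G0 * (cadj A * A)"
    unfolding cD by (simp add: distl_minus)
  also have "\<dots> = 0\<^sub>m m m" unfolding DA by (rule eq_matI) auto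
  finally have "D * cadj D = 0\<^sub>m (dim_row D) (dim_row D)" by simp
  from pos_zero[OF conj_abs this] have "D = 0\<^sub>m m m" by simp
  hence "cadj A - cadj A * A * G0 * cadj A = 0\<^sub>m (dim_row (cadj A)) (dim_col (cadj A))"
    unfolding D_def by simp
  hence "cadj A = cadj A * A * G0 * cadj A"
    by (rule minus_zero_eq[rotated 2]) simp_all
  moreover have "G0 * cadj A \<in> carrier_mat m m" by (intro carrier_matI) simp_all
  ultimately show ?thesis by (intro bexI[of _ "G0 * cadj A"]) simp_all
qed


lemma mult_ext: "A * B = C \<Longrightarrow> dim_col A = dim_row B \<Longrightarrow> dim_col B = dim_row Z \<Longrightarrow>
  A * (B * Z) = C * (Z::'a::semiring_0 mat)"
  by (metis assoc_dim)

lemma herm_proj: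
  fixes A G :: "'a::conjugatable_field mat"
  assumes [simp]: "dim_row A = m" "dim_col A = m" "dim_row G = m" "dim_col G = m"
    and eq: "cadj A = cadj A * A * G"
  shows "cadj (A * G) = A * G" "A * G * A = A"
proof -
  have eq': "cadj A * (A * G) = cadj A" using eq by simp
  have 1: "cadj (A * G) * (A * G) = cadj (A * G)"
    by (simp add: cadj_mult eq')
  have "A * G = cadj (cadj (A * G) * (A * G))" unfolding 1 by simp
  also have "\<dots> = cadj (A * G) * (A * G)" by (simp add: cadj_mult)
  also have "\<dots> = cadj (A * G)" by (rule 1)
  finally show h: "cadj (A * G) = A * G" by simp
  have "A * G * A = cadj (cadj A * cadj (A * G))" by (simp add: cadj_mult)
  also have "\<dots> = cadj (cadj A * (A * G))" unfolding h ..
  also have "\<dots> = A" unfolding eq' by simp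
  finally show "A * G * A = A" .
qed


lemma mp_exists:
  fixes A :: "'a::{conjugatable_field, real_normed_field} mat"
  assumes conj_abs: "\<And>x::'a. x * conjugate x = of_real ((norm x)\<^sup>2)"
    and A: "A \<in> carrier_mat m m"
  shows "\<exists>B. is_mp_inverse A B"
proof -
  have [simp]: "dim_row A = m" "dim_col A = m" using carrier_matD[OF A] by simp_all
  obtain G where G: "G \<in> carrier_mat m m" and eqG: "cadj A = cadj A * A * G"
    using normal_solve[OF conj_abs A] by blast
  have cA: "cadj A \<in> carrier_mat m m" by (intro carrier_matI) simp_all
  obtain H where H: "H \<in> carrier_mat m m" and eqH: "cadj (cadj A) = cadj (cadj A) * cadj A * H"
    using normal_solve[OF conj_abs cA] by blast
  have [simp]: "dim_row G = m" "dim_col G = m" using carrier_matD[OF G] by simp_all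
  have [simp]: "dim_row H = m" "dim_col H = m" using carrier_matD[OF H] by simp_all
  define P where "P = A * G"
  define Q where "Q = cadj A * H"
  have [simp]: "dim_row P = m" "dim_col P = m" "dim_row Q = m" "dim_col Q = m"
    by (simp_all add: P_def Q_def)
  have hP: "cadj P = P" and PA: "P * A = A"
    using herm_proj[of A m G, OF _ _ _ _ eqG] by (simp_all add: P_def)
  have hQ: "cadj Q = Q" and QcA: "Q * cadj A = cadj A"
    using herm_proj[of "cadj A" m H, OF _ _ _ _ eqH] by (simp_all add: Q_def)
  have AQ: "A * Q = A"
  proof -
    have "A * Q = cadj (Q * cadj A)" by (simp add: cadj_mult hQ)
    thus ?thesis unfolding QcA by simp
  qed
  have PP: "P * P = P"
  proof -
    have "cadj P * P = cadj P" unfolding P_def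
      using eqG by (simp add: cadj_mult)
    thus ?thesis unfolding hP .
  qed
  have QQ: "Q * Q = Q"
  proof -
    have "cadj Q * Q = cadj Q" unfolding Q_def
      using eqH by (simp add: cadj_mult)
    thus ?thesis unfolding hQ .
  qed
  have Qalt: "Q = cadj H * A"
  proof -
    have "Q = cadj Q" using hQ by simp
    also have "\<dots> = cadj H * A" unfolding Q_def by (simp add: cadj_mult)
    finally show ?thesis .
  qed
  define B where "B = Q * G * P"
  have [simp]: "dim_row B = m" "dim_col B = m" by (simp_all add: B_def)
  have AB: "A * B = P"
  proof -
    have "A * B = (A * Q) * G * P" unfolding B_def by simp
    also have "\<dots> = P * P" unfolding AQ P_def by simp
    finally show ?thesis unfolding PP .
  qed
  have BA: "B * A = Q"
  proof -
    have "B * A = Q * G * (P * A)" unfolding B_def by simp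
    also have "\<dots> = cadj H * (A * G * A)" unfolding PA Qalt by simp
    also have "\<dots> = Q" unfolding Qalt using PA by (simp add: P_def)
    finally show ?thesis .
  qed
  have "is_mp_inverse A B"
    unfolding is_mp_inverse_def
  proof (intro conjI)
    show "B \<in> carrier_mat (dim_col A) (dim_row A)" by (intro carrier_matI) simp_all
    show "A * B * A = A" unfolding AB PA ..
    show "B * A * B = B"
    proof -
      have "B * A * B = Q * B" using BA by simp
      also have "\<dots> = B" unfolding B_def by (simp add: mult_ext[OF QQ])
      finally show ?thesis .
    qed
    show "cadj (A * B) = A * B" unfolding AB hP ..
    show "cadj (B * A) = B * A" unfolding BA hQ ..
  qed
  thus ?thesis ..
qed

lemma mp_unique:
  fixes A :: "'a::conjugatable_field mat"
  assumes [simp]: "dim_row A = m" "dim_col A = m"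
    and B: "is_mp_inverse A B" and C: "is_mp_inverse A C"
  shows "B = C"
proof -
  from B have [simp]: "dim_row B = m" "dim_col B = m" and B1: "A * B * A = A" and B2: "B * A * B = B"
    and B3: "cadj (A * B) = A * B" and B4: "cadj (B * A) = B * A"
    unfolding is_mp_inverse_def carrier_mat_def by auto
  from C have [simp]: "dim_row C = m" "dim_col C = m" and C1: "A * C * A = A" and C2: "C * A * C = C"
    and C3: "cadj (A * C) = A * C" and C4: "cadj (C * A) = C * A"
    unfolding is_mp_inverse_def carrier_mat_def by auto
  have B3': "cadj B * cadj A = A * B" using B3 by (simp add: cadj_mult)
  have C3': "cadj C * cadj A = A * C" using C3 by (simp add: cadj_mult)
  have B4': "cadj A * cadj B = B * A" using B4 by (simp add: cadj_mult)
  have C4': "cadj A * cadj C = C * A" using C4 by (simp add: cadj_mult)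
  have cA1: "cadj A = cadj A * cadj C * cadj A" using arg_cong[OF C1, of cadj] by (simp add: cadj_mult)
  have cA2: "cadj A = cadj A * cadj B * cadj A" using arg_cong[OF B1, of cadj] by (simp add: cadj_mult)
  have "B = B * (A * B)" using B2 by simp
  also have "\<dots> = B * (cadj B * cadj A)" unfolding B3' ..
  also have "\<dots> = B * (cadj B * (cadj A * cadj C * cadj A))" using cA1 by simp
  also have "\<dots> = B * (A * B) * (A * C)" by (simp add: mult_ext[OF B3'] mult_ext[OF C3'] C3')
  also have "\<dots> = B * A * C" using B2 by (simp add: mult_ext[OF B2])
  finally have b: "B = B * A * C" .
  have "C = (C * A) * C" using C2 by simp
  also have "\<dots> = cadj A * cadj C * C" unfolding C4' ..
  also have "\<dots> = (cadj A * cadj B * cadj A) * cadj C * C" using cA2 by simp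
  also have "\<dots> = (B * A) * (C * A) * C" by (simp add: mult_ext[OF B4'] mult_ext[OF C4'] B4' C4')
  also have "\<dots> = B * A * C" using C2 by (simp add: mult_ext[OF C2])
  finally show ?thesis using b by simp
qed

lemma mp_inverse_eq:
  fixes A :: "'a::conjugatable_field mat"
  assumes "dim_row A = m" "dim_col A = m" and B: "is_mp_inverse A B"
  shows "mp_inverse A = B"
  unfolding mp_inverse_def
  by (rule the_equality, rule B, rule mp_unique[OF assms(1,2) _ B])



lemma Jmat_dims[simp]: "dim_row (Jmat n) = n" "dim_col (Jmat n) = Suc n"
  unfolding Jmat_def by simp_all

lemma Kmat_dims[simp]: "dim_row (Kmat n :: 'a::{ring_1,conjugate} mat) = n" "dim_col (Kmat n :: 'a mat) = n"
  unfolding Kmat_def by simp_all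

lemma circ_part:
  fixes X k kinv Yp :: "'a::conjugatable_field mat"
  assumes [simp]: "dim_row X = n" "dim_col X = n" "dim_row k = n" "dim_col k = n"
    "dim_row kinv = n" "dim_col kinv = n"
    and k1: "k * kinv = 1\<^sub>m n" and k2: "kinv * k = 1\<^sub>m n"
    and K: "Kmat n = k * cadj k"
    and mp: "is_mp_inverse (cadj k * X * k) Yp"
  shows "is_circ_mp_inverse n X (cadj kinv * Yp * kinv)"
proof -
  define Y where "Y = cadj k * X * k"
  have [simp]: "dim_row Y = n" "dim_col Y = n" by (simp_all add: Y_def)
  from mp[folded Y_def] have [simp]: "dim_row Yp = n" "dim_col Yp = n" and Y1: "Y * Yp * Y = Y" and Y2: "Yp * Y * Yp = Yp"
    and Y3: "cadj (Y * Yp) = Y * Yp" and Y4: "cadj (Yp * Y) = Yp * Y"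
    unfolding is_mp_inverse_def carrier_mat_def by auto
  have c1: "cadj kinv * cadj k = 1\<^sub>m n" using arg_cong[OF k1, of cadj] by (simp add: cadj_mult)
  have c2: "cadj k * cadj kinv = 1\<^sub>m n" using arg_cong[OF k2, of cadj] by (simp add: cadj_mult)
  have e1[simp]: "k * (kinv * W) = W" if "dim_row W = n" for W using that by (simp add: mult_ext[OF k1])
  have e2[simp]: "kinv * (k * W) = W" if "dim_row W = n" for W using that by (simp add: mult_ext[OF k2])
  have e3[simp]: "cadj kinv * (cadj k * W) = W" if "dim_row W = n" for W using that by (simp add: mult_ext[OF c1])
  have e4[simp]: "cadj k * (cadj kinv * W) = W" if "dim_row W = n" for W using that by (simp add: mult_ext[OF c2])
  have Y1'[simp]: "Y * (Yp * (Y * W)) = Y * W" if "dim_row W = n" for W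
  proof -
    have "Y * Yp * Y * W = Y * W" using Y1 by simp
    then show ?thesis using that by simp
  qed
  have Y2'[simp]: "Yp * (Y * (Yp * W)) = Yp * W" if "dim_row W = n" for W
  proof -
    have "Yp * Y * Yp * W = Yp * W" using Y2 by simp
    then show ?thesis using that by simp
  qed
  have X: "X = cadj kinv * Y * kinv" unfolding Y_def by (simp add: k1 c1)
  have XKZ: "circ n X (cadj kinv * Yp * kinv) = cadj kinv * (Y * Yp) * kinv"
    unfolding circ_def K X by (simp add: c1 k2)
  have ZKX: "circ n (cadj kinv * Yp * kinv) X = cadj kinv * (Yp * Y) * kinv"
    unfolding circ_def K X by (simp add: c1 k2)
  show ?thesis unfolding is_circ_mp_inverse_def
  proof (intro conjI)
    show "cadj kinv * Yp * kinv \<in> carrier_mat n n" by (intro carrier_matI) simp_all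
    show "circ n (circ n X (cadj kinv * Yp * kinv)) X = X"
    proof -
      have "circ n (cadj kinv * (Y * Yp) * kinv) (cadj kinv * Y * kinv) = cadj kinv * Y * kinv"
        by (simp add: circ_def K c1 k2)
      thus ?thesis unfolding XKZ by (simp only: X[symmetric])
    qed
    show "circ n (circ n (cadj kinv * Yp * kinv) X) (cadj kinv * Yp * kinv) = cadj kinv * Yp * kinv"
      unfolding ZKX by (simp add: circ_def K c1 k2)
    show "cadj (circ n X (cadj kinv * Yp * kinv)) = circ n X (cadj kinv * Yp * kinv)"
      unfolding XKZ using Y3 by (simp add: cadj_mult)
    show "cadj (circ n (cadj kinv * Yp * kinv) X) = circ n (cadj kinv * Yp * kinv) X"
      unfolding ZKX using Y4 by (simp add: cadj_mult)
  qed
qed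


lemma J_part:
  fixes X Z :: "'a::conjugatable_field mat"
  assumes [simp]: "dim_row X = n" "dim_col X = n"
    and c: "is_circ_mp_inverse n X Z"
  shows "is_mp_inverse (cadj (Jmat n) * X * Jmat n) (cadj (Jmat n) * Z * Jmat n)"
proof -
  let ?J = "Jmat n :: 'a mat"
  from c have [simp]: "dim_row Z = n" "dim_col Z = n"
    and c1: "X * Kmat n * Z * Kmat n * X = X" and c2: "Z * Kmat n * X * Kmat n * Z = Z"
    and c3: "cadj (X * Kmat n * Z) = X * Kmat n * Z" and c4: "cadj (Z * Kmat n * X) = Z * Kmat n * X"
    unfolding is_circ_mp_inverse_def circ_def carrier_mat_def by auto
  have JJ: "?J * (cadj ?J * W) = Kmat n * W" if "dim_row W = n" for W
    using that by (simp add: Kmat_def)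
  have "cadj ?J * X * ?J * (cadj ?J * Z * ?J) * (cadj ?J * X * ?J) = cadj ?J * (X * Kmat n * Z * Kmat n * X) * ?J"
    by (simp add: JJ)
  hence m1: "cadj ?J * X * ?J * (cadj ?J * Z * ?J) * (cadj ?J * X * ?J) = cadj ?J * X * ?J"
    unfolding c1 .
  have "cadj ?J * Z * ?J * (cadj ?J * X * ?J) * (cadj ?J * Z * ?J) = cadj ?J * (Z * Kmat n * X * Kmat n * Z) * ?J"
    by (simp add: JJ)
  hence m2: "cadj ?J * Z * ?J * (cadj ?J * X * ?J) * (cadj ?J * Z * ?J) = cadj ?J * Z * ?J"
    unfolding c2 .
  have p3: "cadj ?J * X * ?J * (cadj ?J * Z * ?J) = cadj ?J * (X * Kmat n * Z) * ?J"
    by (simp add: JJ)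
  have p4: "cadj ?J * Z * ?J * (cadj ?J * X * ?J) = cadj ?J * (Z * Kmat n * X) * ?J"
    by (simp add: JJ)
  have h: "cadj (cadj ?J * W * ?J) = cadj ?J * W * ?J" if "dim_row W = n" "dim_col W = n" "cadj W = W" for W
    using that by (simp add: cadj_mult)
  show ?thesis unfolding is_mp_inverse_def
  proof (intro conjI)
    show "cadj ?J * Z * ?J \<in> carrier_mat (dim_col (cadj ?J * X * ?J)) (dim_row (cadj ?J * X * ?J))"
      by (intro carrier_matI) simp_all
    show "cadj (cadj ?J * X * ?J * (cadj ?J * Z * ?J)) = cadj ?J * X * ?J * (cadj ?J * Z * ?J)"
      unfolding p3 by (rule h) (use c3 in simp_all)
    show "cadj (cadj ?J * Z * ?J * (cadj ?J * X * ?J)) = cadj ?J * Z * ?J * (cadj ?J * X * ?J)"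
      unfolding p4 by (rule h) (use c4 in simp_all)
  qed (fact m1, fact m2)
qed

lemma J_rowsum: "j < n \<Longrightarrow> (\<Sum>i<Suc n. (Jmat n :: 'a::ring_1 mat) $$ (j,i)) = 0"
  unfolding Jmat_def by (simp add: sum.delta')

lemma S_part:
  fixes Z :: "'a::conjugatable_field mat"
  assumes [simp]: "dim_row Z = n" "dim_col Z = n"
  shows "cadj (Jmat n) * Z * Jmat n \<in> Smats (Suc n)"
proof -
  let ?J = "Jmat n :: 'a mat"
  let ?W = "cadj ?J * Z * ?J"
  have rows: "(\<Sum>j<Suc n. ?W $$ (i,j)) = 0" if i: "i < Suc n" for i
  proof -
    define M where "M = cadj ?J * Z"
    have [simp]: "dim_row M = Suc n" "dim_col M = n" by (simp_all add: M_def)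
    have W: "?W = M * ?J" unfolding M_def ..
    have "(\<Sum>j<Suc n. ?W $$ (i,j)) = (\<Sum>j<Suc n. \<Sum>b<n. M $$ (i,b) * ?J $$ (b,j))"
      unfolding W using i by (intro sum.cong) (simp_all add: scalar_prod_def atLeast0LessThan)
    also have "\<dots> = (\<Sum>b<n. M $$ (i,b) * (\<Sum>j<Suc n. ?J $$ (b,j)))"
      unfolding sum_distrib_left by (rule sum.swap)
    also have "\<dots> = 0" by (intro sum.neutral ballI) (simp add: J_rowsum del: sum.lessThan_Suc)
    finally show ?thesis .
  qed
  have cols: "(\<Sum>i<Suc n. ?W $$ (i,j)) = 0" if j: "j < Suc n" for j
  proof -
    define M where "M = Z * ?J"
    have [simp]: "dim_row M = n" "dim_col M = Suc n" by (simp_all add: M_def)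
    have W: "?W = cadj ?J * M" unfolding M_def by simp
    have "(\<Sum>i<Suc n. ?W $$ (i,j)) = (\<Sum>i<Suc n. \<Sum>b<n. conjugate (?J $$ (b,i)) * M $$ (b,j))"
      unfolding W using j by (intro sum.cong) (simp_all add: scalar_prod_def atLeast0LessThan)
    also have "\<dots> = (\<Sum>b<n. conjugate (\<Sum>i<Suc n. ?J $$ (b,i)) * M $$ (b,j))"
      unfolding sum_conjugate[OF finite_lessThan] sum_distrib_right by (rule sum.swap)
    also have "\<dots> = 0" by (intro sum.neutral ballI) (simp add: J_rowsum del: sum.lessThan_Suc)
    finally show ?thesis .
  qed
  show ?thesis unfolding Smats_def
    using rows cols by (auto intro!: carrier_matI)
qed


lemma N_inj:
  fixes Y :: "'a::{conjugatable_field, real_normed_field} mat"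
  assumes conj_abs: "\<And>x::'a. x * conjugate x = of_real ((norm x)\<^sup>2)"
    and [simp]: "dim_row Y = n" "dim_col Y = n" and d: "\<delta> > 0"
    and v: "v \<in> carrier_vec n" and z: "(cadj Y * Y + of_real \<delta> \<cdot>\<^sub>m 1\<^sub>m n) *\<^sub>v v = 0\<^sub>v n"
  shows "v = 0\<^sub>v n"
proof -
  let ?N = "cadj Y * Y + of_real \<delta> \<cdot>\<^sub>m 1\<^sub>m n"
  define V where "V = mat n 1 (\<lambda>(i,j). v $ i)"
  have [simp]: "dim_row V = n" "dim_col V = 1" by (simp_all add: V_def)
  have dv[simp]: "dim_vec v = n" using v by simp
  have colV: "col V 0 = v" unfolding V_def by (intro eq_vecI) simp_all
  have NV: "?N * V = 0\<^sub>m n 1"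
  proof (rule eq_matI)
    fix i j assume "i < dim_row (0\<^sub>m n 1 :: 'a mat)" "j < dim_col (0\<^sub>m n 1 :: 'a mat)"
    hence i: "i < n" and j: "j = 0" by auto
    have "(?N * V) $$ (i,j) = row ?N i \<bullet> v" using i j colV by simp
    also have "\<dots> = (?N *\<^sub>v v) $ i" using i by simp
    also have "\<dots> = 0" using z i by simp
    finally show "(?N * V) $$ (i,j) = 0\<^sub>m n 1 $$ (i,j)" using i j by simp
  qed simp_all
  have "cadj V * ?N * V = cadj (Y * V) * (Y * V) + of_real \<delta> \<cdot>\<^sub>m (cadj V * V)"
    by (simp add: distl_dim distr_dim cadj_mult)
  moreover have "cadj V * ?N * V = 0\<^sub>m 1 1"
    by (subst assoc_dim) (simp_all add: NV)
  ultimately have E: "cadj (Y * V) * (Y * V) + of_real \<delta> \<cdot>\<^sub>m (cadj V * V) = 0\<^sub>m 1 1" by simp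
  have "(cadj (Y * V) * (Y * V)) $$ (0,0) + of_real \<delta> * (cadj V * V) $$ (0,0) = 0"
    using arg_cong[OF E, of "\<lambda>M. M $$ (0,0)"]
    by (simp only: index_add_mat index_smult_mat index_zero_mat index_mult_mat(2,3) cadj_dims
       \<open>dim_col V = 1\<close> zero_less_one)
  moreover have "(cadj (Y * V) * (Y * V)) $$ (0,0) = of_real (\<Sum>i<n. (norm ((Y * V) $$ (i,0)))\<^sup>2)"
    using diag_MsM[OF conj_abs, of 0 "Y * V"] by simp
  moreover have "(cadj V * V) $$ (0,0) = of_real (\<Sum>i<n. (norm (V $$ (i,0)))\<^sup>2)"
    using diag_MsM[OF conj_abs, of 0 V] by simp
  ultimately have "of_real (\<Sum>i<n. (norm ((Y * V) $$ (i,0)))\<^sup>2) + of_real \<delta> * of_real (\<Sum>i<n. (norm (V $$ (i,0)))\<^sup>2) = (0::'a)"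
    by (simp only:)
  hence "(\<Sum>i<n. (norm ((Y * V) $$ (i,0)))\<^sup>2) + \<delta> * (\<Sum>i<n. (norm (V $$ (i,0)))\<^sup>2) = 0"
    by (metis of_real_add of_real_mult of_real_eq_0_iff)
  moreover have "(\<Sum>i<n. (norm ((Y * V) $$ (i,0)))\<^sup>2) \<ge> 0" by (intro sum_nonneg) simp
  moreover have "(\<Sum>i<n. (norm (V $$ (i,0)))\<^sup>2) \<ge> 0" by (intro sum_nonneg) simp
  ultimately have "(\<Sum>i<n. (norm (V $$ (i,0)))\<^sup>2) = 0" using d
    by (smt (verit) mult_pos_pos)
  hence "\<forall>i<n. (norm (V $$ (i,0)))\<^sup>2 = 0" by (subst (asm) sum_nonneg_eq_0_iff) auto
  thus ?thesis by (intro eq_vecI) (auto simp: V_def)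
qed

lemma N_invertible:
  fixes Y :: "'a::{conjugatable_field, real_normed_field} mat"
  assumes conj_abs: "\<And>x::'a. x * conjugate x = of_real ((norm x)\<^sup>2)"
    and [simp]: "dim_row Y = n" "dim_col Y = n" and d: "\<delta> > 0"
  shows "\<exists>R. R \<in> carrier_mat n n \<and> (cadj Y * Y + of_real \<delta> \<cdot>\<^sub>m 1\<^sub>m n) * R = 1\<^sub>m n
     \<and> R * (cadj Y * Y + of_real \<delta> \<cdot>\<^sub>m 1\<^sub>m n) = 1\<^sub>m n"
proof -
  let ?N = "cadj Y * Y + of_real \<delta> \<cdot>\<^sub>m 1\<^sub>m n"
  have N: "?N \<in> carrier_mat n n" by (intro carrier_matI) simp_all
  have "det ?N \<noteq> 0"
    unfolding det_0_iff_vec_prod_zero_field[OF N] using N_inj[OF conj_abs assms(2,3) d] by blast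
  from det_non_zero_imp_unit[OF N this, of "()"]
  show ?thesis unfolding Units_def ring_mat_def by auto
qed


lemma norm_conj:
  fixes x :: "'a::{conjugatable_field, real_normed_field}"
  assumes conj_abs: "\<And>x::'a. x * conjugate x = of_real ((norm x)\<^sup>2)"
  shows "norm (conjugate x) = norm x"
proof -
  have "of_real ((norm (conjugate x))\<^sup>2) = (of_real ((norm x)\<^sup>2) :: 'a)"
    using conj_abs[of "conjugate x"] conj_abs[of x] by (simp add: mult.commute)
  hence "(norm (conjugate x))\<^sup>2 = (norm x)\<^sup>2" by (simp only: of_real_eq_iff)
  thus ?thesis by (simp add: power2_eq_iff_nonneg)
qed

lemma U_bound:
  fixes Y R :: "'a::{conjugatable_field, real_normed_field} mat"
  assumes conj_abs: "\<And>x::'a. x * conjugate x = of_real ((norm x)\<^sup>2)"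
    and [simp]: "dim_row Y = n" "dim_col Y = n" "dim_row R = n" "dim_col R = n" and d: "\<delta> > 0"
    and RN: "R * (cadj Y * Y + of_real \<delta> \<cdot>\<^sub>m 1\<^sub>m n) = 1\<^sub>m n"
    and NR: "(cadj Y * Y + of_real \<delta> \<cdot>\<^sub>m 1\<^sub>m n) * R = 1\<^sub>m n"
    and i: "i < n" and j: "j < n"
  shows "(norm ((R * cadj Y) $$ (i,j)))\<^sup>2 \<le> 1 / (4 * \<delta>)"
proof -
  define U where "U = R * cadj Y"
  have [simp]: "dim_row U = n" "dim_col U = n" by (simp_all add: U_def)
  have "(cadj Y * Y + of_real \<delta> \<cdot>\<^sub>m 1\<^sub>m n) * U = cadj Y"
    unfolding U_def by (simp add: mult_ext[OF NR])
  hence NU: "cadj Y * (Y * U) + of_real \<delta> \<cdot>\<^sub>m U = cadj Y"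
    by (simp add: distr_dim)
  define V where "V = Y * U"
  have [simp]: "dim_row V = n" "dim_col V = n" by (simp_all add: V_def)
  have "cadj U * (cadj Y * (Y * U) + of_real \<delta> \<cdot>\<^sub>m U) = cadj U * cadj Y" unfolding NU ..
  hence E: "cadj V * V + of_real \<delta> \<cdot>\<^sub>m (cadj U * U) = cadj V"
    unfolding V_def by (simp add: distl_dim cadj_mult)
  have "(cadj V * V) $$ (j,j) + of_real \<delta> * (cadj U * U) $$ (j,j) = cadj V $$ (j,j)"
    using arg_cong[OF E, of "\<lambda>M. M $$ (j,j)"] j
    by (simp only: index_add_mat index_smult_mat index_mult_mat(2,3) cadj_dims \<open>dim_col V = n\<close>
      \<open>dim_row V = n\<close> \<open>dim_col U = n\<close>)
  moreover have "(cadj V * V) $$ (j,j) = of_real (\<Sum>a<n. (norm (V $$ (a,j)))\<^sup>2)"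
    using diag_MsM[OF conj_abs, of j V] j by simp
  moreover have "(cadj U * U) $$ (j,j) = of_real (\<Sum>a<n. (norm (U $$ (a,j)))\<^sup>2)"
    using diag_MsM[OF conj_abs, of j U] j by simp
  moreover have "cadj V $$ (j,j) = conjugate (V $$ (j,j))" using j by simp
  ultimately have "of_real ((\<Sum>a<n. (norm (V $$ (a,j)))\<^sup>2) + \<delta> * (\<Sum>a<n. (norm (U $$ (a,j)))\<^sup>2))
     = conjugate (V $$ (j,j))" by simp
  hence "norm (of_real ((\<Sum>a<n. (norm (V $$ (a,j)))\<^sup>2) + \<delta> * (\<Sum>a<n. (norm (U $$ (a,j)))\<^sup>2)) :: 'a)
     = norm (V $$ (j,j))" using norm_conj[OF conj_abs] by metis
  hence H: "\<bar>(\<Sum>a<n. (norm (V $$ (a,j)))\<^sup>2) + \<delta> * (\<Sum>a<n. (norm (U $$ (a,j)))\<^sup>2)\<bar>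
     = norm (V $$ (j,j))" by (simp only: norm_of_real)
  have s0: "(\<Sum>a<n. (norm (V $$ (a,j)))\<^sup>2) \<ge> 0" "(\<Sum>a<n. (norm (U $$ (a,j)))\<^sup>2) \<ge> 0"
    by (intro sum_nonneg, simp)+
  have eq: "(\<Sum>a<n. (norm (V $$ (a,j)))\<^sup>2) + \<delta> * (\<Sum>a<n. (norm (U $$ (a,j)))\<^sup>2) = norm (V $$ (j,j))"
    using H s0 d by (smt (verit) mult_nonneg_nonneg)
  have sV: "(norm (V $$ (j,j)))\<^sup>2 \<le> (\<Sum>a<n. (norm (V $$ (a,j)))\<^sup>2)"
    using j by (intro member_le_sum) auto
  have sU: "(norm (U $$ (i,j)))\<^sup>2 \<le> (\<Sum>a<n. (norm (U $$ (a,j)))\<^sup>2)"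
    using i by (intro member_le_sum) auto
  have q: "norm (V $$ (j,j)) - (norm (V $$ (j,j)))\<^sup>2 \<le> 1/4"
  proof -
    have "0 \<le> (norm (V $$ (j,j)) - 1/2)\<^sup>2" by simp
    thus ?thesis by (simp add: power2_eq_square algebra_simps)
  qed
  have "\<delta> * (norm (U $$ (i,j)))\<^sup>2 \<le> \<delta> * (\<Sum>a<n. (norm (U $$ (a,j)))\<^sup>2)"
    by (rule mult_left_mono[OF sU]) (use d in simp)
  also have "\<dots> = norm (V $$ (j,j)) - (\<Sum>a<n. (norm (V $$ (a,j)))\<^sup>2)" using eq by linarith
  also have "\<dots> \<le> norm (V $$ (j,j)) - (norm (V $$ (j,j)))\<^sup>2" using sV by linarith
  also have "\<dots> \<le> 1/4" by (rule q)
  finally have "\<delta> * (norm (U $$ (i,j)))\<^sup>2 \<le> 1/4" .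
  thus ?thesis unfolding U_def[symmetric] using d by (simp add: field_simps)
qed



lemma minv_eq:
  fixes A B :: "'a::semiring_1 mat"
  assumes [simp]: "dim_row A = n" "dim_col A = n" "dim_row B = n" "dim_col B = n"
    and AB: "A * B = 1\<^sub>m n" and BA: "B * A = 1\<^sub>m n"
  shows "minv A = B"
  unfolding minv_def
proof (rule the_equality)
  show "B \<in> carrier_mat (dim_row A) (dim_row A) \<and> A * B = 1\<^sub>m (dim_row A) \<and> B * A = 1\<^sub>m (dim_row A)"
    using AB BA by (simp add: carrier_matI)
  fix C assume C: "C \<in> carrier_mat (dim_row A) (dim_row A) \<and> A * C = 1\<^sub>m (dim_row A) \<and> C * A = 1\<^sub>m (dim_row A)"
  hence C1: "C \<in> carrier_mat n n" and CA: "C * A = 1\<^sub>m n" by simp_all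
  have [simp]: "dim_row C = n" "dim_col C = n" using carrier_matD[OF C1] by simp_all
  have "C = C * (A * B)" by (simp add: AB)
  also have "\<dots> = C * A * B" by simp
  also have "\<dots> = B" unfolding CA by simp
  finally show "C = B" .
qed

lemma sqrt_bound:
  fixes x d :: real
  assumes d: "d > 0" and x: "x\<^sup>2 \<le> 1 / (4 * d)" and x0: "x \<ge> 0"
  shows "d * x \<le> sqrt d / 2"
proof -
  have "(d * x)\<^sup>2 = d\<^sup>2 * x\<^sup>2" by (simp only: power_mult_distrib)
  also have "\<dots> \<le> d\<^sup>2 * (1 / (4 * d))" by (rule mult_left_mono[OF x]) simp
  also have "d\<^sup>2 * (1 / (4 * d)) = d / 4" using d by (simp add: power2_eq_square)
  finally have "d * x \<le> sqrt (d / 4)" by (rule real_le_rsqrt)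
  also have "sqrt (d / 4) = sqrt d / 2" by (simp add: real_sqrt_divide)
  finally show ?thesis .
qed

lemma lim_core:
  fixes Y Yp :: "'a::{conjugatable_field, real_normed_field} mat" and R :: "real \<Rightarrow> 'a mat"
  assumes conj_abs: "\<And>x::'a. x * conjugate x = of_real ((norm x)\<^sup>2)"
    and [simp]: "dim_row Y = n" "dim_col Y = n"
    and mp: "is_mp_inverse Y Yp"
    and R: "\<And>\<delta>. \<delta> > 0 \<Longrightarrow> R \<delta> \<in> carrier_mat n n \<and>
        (cadj Y * Y + of_real \<delta> \<cdot>\<^sub>m 1\<^sub>m n) * R \<delta> = 1\<^sub>m n \<and> R \<delta> * (cadj Y * Y + of_real \<delta> \<cdot>\<^sub>m 1\<^sub>m n) = 1\<^sub>m n"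
    and i: "i < n" and j: "j < n"
  shows "((\<lambda>\<delta>. (R \<delta> * cadj Y) $$ (i,j)) \<longlongrightarrow> Yp $$ (i,j)) (at_right 0)"
proof -
  from mp have [simp]: "dim_row Yp = n" "dim_col Yp = n" and Y1: "Y * Yp * Y = Y" and Y2: "Yp * Y * Yp = Yp"
    and Y3: "cadj (Y * Yp) = Y * Yp" and Y4: "cadj (Yp * Y) = Yp * Y"
    unfolding is_mp_inverse_def carrier_mat_def by auto
  define W where "W = cadj Yp * Yp"
  have [simp]: "dim_row W = n" "dim_col W = n" by (simp_all add: W_def)
  have YpW: "Yp = cadj Y * W"
  proof -
    have "Yp = cadj (Yp * Y) * Yp" unfolding Y4 using Y2 by simp
    thus ?thesis unfolding W_def by (simp add: cadj_mult)
  qed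
  have cYYYp: "cadj Y * (Y * Yp) = cadj Y"
  proof -
    have "cadj Y * (Y * Yp) = cadj Y * cadj (Y * Yp)" unfolding Y3 ..
    also have "\<dots> = cadj (Y * Yp * Y)" by (simp add: cadj_mult)
    also have "\<dots> = cadj Y" unfolding Y1 ..
    finally show ?thesis .
  qed
  define C where "C = (\<Sum>b<n. norm (W $$ (b,j))) / 2"
  have bound: "norm ((R \<delta> * cadj Y) $$ (i,j) - Yp $$ (i,j)) \<le> C * sqrt \<delta>" if d: "\<delta> > 0" for \<delta>
  proof -
    from R[OF d] have Rc: "R \<delta> \<in> carrier_mat n n"
      and NR: "(cadj Y * Y + of_real \<delta> \<cdot>\<^sub>m 1\<^sub>m n) * R \<delta> = 1\<^sub>m n"
      and RN: "R \<delta> * (cadj Y * Y + of_real \<delta> \<cdot>\<^sub>m 1\<^sub>m n) = 1\<^sub>m n" by blast+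
    have [simp]: "dim_row (R \<delta>) = n" "dim_col (R \<delta>) = n" using carrier_matD[OF Rc] by simp_all
    define F where "F = R \<delta> * cadj Y"
    have [simp]: "dim_row F = n" "dim_col F = n" by (simp_all add: F_def)
    have NYp: "(cadj Y * Y + of_real \<delta> \<cdot>\<^sub>m 1\<^sub>m n) * Yp = cadj Y + of_real \<delta> \<cdot>\<^sub>m Yp"
      by (simp add: distr_dim cYYYp)
    have "Yp = R \<delta> * ((cadj Y * Y + of_real \<delta> \<cdot>\<^sub>m 1\<^sub>m n) * Yp)"
      by (simp add: mult_ext[OF RN])
    also have "\<dots> = F + of_real \<delta> \<cdot>\<^sub>m (F * W)"
      unfolding NYp F_def by (subst YpW) (simp add: distl_dim)
    finally have Yp_eq: "Yp = F + of_real \<delta> \<cdot>\<^sub>m (F * W)" .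
    have "Yp $$ (i,j) - F $$ (i,j) = of_real \<delta> * (F * W) $$ (i,j)"
      using arg_cong[OF Yp_eq, of "\<lambda>M. M $$ (i,j)"] i j
      by (simp only: index_add_mat index_smult_mat index_mult_mat(2,3) \<open>dim_row F = n\<close>
          \<open>dim_col W = n\<close>) simp
    also have "\<dots> = (\<Sum>b<n. (of_real \<delta> * F $$ (i,b)) * W $$ (b,j))"
      using i j by (simp add: scalar_prod_def atLeast0LessThan sum_distrib_left mult.assoc)
    finally have diff: "Yp $$ (i,j) - F $$ (i,j) = (\<Sum>b<n. (of_real \<delta> * F $$ (i,b)) * W $$ (b,j))" .
    have "norm (F $$ (i,j) - Yp $$ (i,j)) = norm (Yp $$ (i,j) - F $$ (i,j))" by (rule norm_minus_commute)
    also have "\<dots> \<le> (\<Sum>b<n. norm ((of_real \<delta> * F $$ (i,b)) * W $$ (b,j)))"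
      unfolding diff by (rule norm_sum)
    also have "\<dots> \<le> (\<Sum>b<n. (sqrt \<delta> / 2) * norm (W $$ (b,j)))"
    proof (rule sum_mono)
      fix b assume b: "b \<in> {..<n}"
      have "(norm (F $$ (i,b)))\<^sup>2 \<le> 1 / (4 * \<delta>)"
        unfolding F_def using U_bound[OF conj_abs _ _ _ _ d RN NR i] b by simp
      hence "\<delta> * norm (F $$ (i,b)) \<le> sqrt \<delta> / 2" by (intro sqrt_bound[OF d]) auto
      hence "norm (of_real \<delta> * F $$ (i,b)) \<le> sqrt \<delta> / 2" using d by (simp add: norm_mult)
      thus "norm ((of_real \<delta> * F $$ (i,b)) * W $$ (b,j)) \<le> (sqrt \<delta> / 2) * norm (W $$ (b,j))"
        unfolding norm_mult[of "of_real \<delta> * F $$ (i,b)"] by (rule mult_right_mono) simp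
    qed
    also have "\<dots> = C * sqrt \<delta>" unfolding C_def sum_distrib_left[symmetric] sum_divide_distrib[symmetric]
      by (simp add: sum_distrib_right[symmetric] mult.commute)
    finally show ?thesis unfolding F_def .
  qed
  have ev: "\<forall>\<^sub>F \<delta> in at_right 0. norm ((R \<delta> * cadj Y) $$ (i,j) - Yp $$ (i,j)) \<le> C * sqrt \<delta>"
    using eventually_at_right_less[of "0::real"] by eventually_elim (rule bound)
  have "((\<lambda>\<delta>. C * sqrt \<delta>) \<longlongrightarrow> C * sqrt 0) (at_right (0::real))"
    by (intro tendsto_intros)
  hence "((\<lambda>\<delta>. C * sqrt \<delta>) \<longlongrightarrow> 0) (at_right (0::real))" by simp
  from Lim_null_comparison[OF ev this]
  have "((\<lambda>\<delta>. ((R \<delta> * cadj Y) $$ (i,j) - Yp $$ (i,j)) + Yp $$ (i,j)) \<longlongrightarrow> 0 + Yp $$ (i,j)) (at_right 0)"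
    by (intro tendsto_add tendsto_const)
  thus ?thesis by simp
qed


lemma entry3:
  fixes P F Q :: "'a::comm_semiring_1 mat"
  assumes [simp]: "dim_row P = n" "dim_col P = n" "dim_row F = n" "dim_col F = n" "dim_row Q = n" "dim_col Q = n"
    and i: "i < n" and j: "j < n"
  shows "(P * F * Q) $$ (i,j) = (\<Sum>a<n. P $$ (i,a) * (\<Sum>b<n. F $$ (a,b) * Q $$ (b,j)))"
  using i j by (simp add: scalar_prod_def atLeast0LessThan)

theorem theorem6:
  fixes X k kinv :: "'a::{conjugatable_field, real_normed_field} mat" and n :: nat
  assumes conj_abs: "\<And>x::'a. x * conjugate x = of_real ((norm x)\<^sup>2)"
    and X: "X \<in> carrier_mat n n"
    and k: "k \<in> carrier_mat n n" and kinv: "kinv \<in> carrier_mat n n"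
    and k_inv1: "k * kinv = 1\<^sub>m n" and k_inv2: "kinv * k = 1\<^sub>m n"
    and K_fact: "Kmat n = k * cadj k"
  shows "mp_inverse (cadj (Jmat n) * X * Jmat n) \<in> Smats (Suc n)
    \<and> is_circ_mp_inverse n X (cadj kinv * mp_inverse (cadj k * X * k) * kinv)
    \<and> mp_inverse (cadj (Jmat n) * X * Jmat n)
        = cadj (Jmat n) * (cadj kinv * mp_inverse (cadj k * X * k) * kinv) * Jmat n
    \<and> (\<forall>\<delta>>0. invertible_mat (cadj X * Kmat n * X * Kmat n + of_real \<delta> \<cdot>\<^sub>m 1\<^sub>m n))
    \<and> (\<exists>L \<in> carrier_mat n n.
         (\<forall>i<n. \<forall>j<n. ((\<lambda>\<delta>::real. (minv (cadj X * Kmat n * X * Kmat n + of_real \<delta> \<cdot>\<^sub>m 1\<^sub>m n)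
                                   * cadj X) $$ (i,j)) \<longlongrightarrow> L $$ (i,j)) (at_right 0))
         \<and> mp_inverse (cadj (Jmat n) * X * Jmat n) = cadj (Jmat n) * L * Jmat n)"
proof -
  have [simp]: "dim_row X = n" "dim_col X = n" using carrier_matD[OF X] by simp_all
  have [simp]: "dim_row k = n" "dim_col k = n" using carrier_matD[OF k] by simp_all
  have [simp]: "dim_row kinv = n" "dim_col kinv = n" using carrier_matD[OF kinv] by simp_all
  define Y where "Y = cadj k * X * k"
  have [simp]: "dim_row Y = n" "dim_col Y = n" by (simp_all add: Y_def)
  have Yc: "Y \<in> carrier_mat n n" by (intro carrier_matI) simp_all
  obtain Yp where mpY: "is_mp_inverse Y Yp" using mp_exists[OF conj_abs Yc] by blast
  have Ypeq: "mp_inverse Y = Yp" by (rule mp_inverse_eq[OF _ _ mpY]) simp_all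
  from mpY have [simp]: "dim_row Yp = n" "dim_col Yp = n"
    unfolding is_mp_inverse_def carrier_mat_def by auto
  define Z where "Z = cadj kinv * Yp * kinv"
  have [simp]: "dim_row Z = n" "dim_col Z = n" by (simp_all add: Z_def)
  have circ: "is_circ_mp_inverse n X Z"
    unfolding Z_def by (rule circ_part[OF _ _ _ _ _ _ k_inv1 k_inv2 K_fact mpY[unfolded Y_def]]) simp_all
  have Teq: "mp_inverse (cadj (Jmat n) * X * Jmat n) = cadj (Jmat n) * Z * Jmat n"
    by (rule mp_inverse_eq[OF _ _ J_part[OF _ _ circ]]) simp_all
  have S: "cadj (Jmat n) * Z * Jmat n \<in> Smats (Suc n)" by (rule S_part) simp_all
  have c1: "cadj kinv * cadj k = 1\<^sub>m n" using arg_cong[OF k_inv1, of cadj] by (simp add: cadj_mult)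
  have c2: "cadj k * cadj kinv = 1\<^sub>m n" using arg_cong[OF k_inv2, of cadj] by (simp add: cadj_mult)
  have e1[simp]: "k * (kinv * W) = W" if "dim_row W = n" for W using that by (simp add: mult_ext[OF k_inv1])
  have e2[simp]: "kinv * (k * W) = W" if "dim_row W = n" for W using that by (simp add: mult_ext[OF k_inv2])
  have e3[simp]: "cadj kinv * (cadj k * W) = W" if "dim_row W = n" for W using that by (simp add: mult_ext[OF c1])
  have e4[simp]: "cadj k * (cadj kinv * W) = W" if "dim_row W = n" for W using that by (simp add: mult_ext[OF c2])
  have Xeq: "X = cadj kinv * Y * kinv" unfolding Y_def by (simp add: k_inv1 c1)
  have cX: "cadj X = cadj kinv * cadj Y * kinv"
    by (subst Xeq) (simp add: cadj_mult)
  define N where "N = (\<lambda>\<delta>::real. cadj Y * Y + of_real \<delta> \<cdot>\<^sub>m 1\<^sub>m n)"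
  have [simp]: "dim_row (N d) = n" "dim_col (N d) = n" for d by (simp_all add: N_def)
  define M where "M = (\<lambda>\<delta>::real. cadj X * Kmat n * X * Kmat n + of_real \<delta> \<cdot>\<^sub>m 1\<^sub>m n)"
  have Meq: "M d = cadj kinv * N d * cadj k" for d
  proof -
    have "cadj X * Kmat n * X * Kmat n = cadj kinv * (cadj Y * Y) * cadj k"
      unfolding K_fact cX by (subst Xeq) (simp add: c1 k_inv2)
    moreover have "cadj kinv * (of_real d \<cdot>\<^sub>m 1\<^sub>m n) * cadj k = of_real d \<cdot>\<^sub>m (cadj kinv * cadj k)"
      by simp
    hence "cadj kinv * (of_real d \<cdot>\<^sub>m 1\<^sub>m n) * cadj k = of_real d \<cdot>\<^sub>m 1\<^sub>m n"
      unfolding c1 .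
    ultimately show ?thesis unfolding M_def N_def
      by (simp add: distl_dim distr_dim)
  qed
  define Rf where "Rf = (\<lambda>\<delta>. minv (N \<delta>))"
  have Rf: "Rf \<delta> \<in> carrier_mat n n \<and> N \<delta> * Rf \<delta> = 1\<^sub>m n \<and> Rf \<delta> * N \<delta> = 1\<^sub>m n" if d: "\<delta> > 0" for \<delta>
  proof -
    obtain R where Rc: "R \<in> carrier_mat n n" and NR: "N \<delta> * R = 1\<^sub>m n" and RN: "R * N \<delta> = 1\<^sub>m n"
      using N_invertible[OF conj_abs _ _ d, of Y n] unfolding N_def by auto
    have [simp]: "dim_row R = n" "dim_col R = n" using carrier_matD[OF Rc] by simp_all
    have "Rf \<delta> = R" unfolding Rf_def by (rule minv_eq[OF _ _ _ _ NR RN]) simp_all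
    thus ?thesis using Rc NR RN by simp
  qed
  have Minv: "minv (M \<delta>) = cadj kinv * Rf \<delta> * cadj k \<and> invertible_mat (M \<delta>)" if d: "\<delta> > 0" for \<delta>
  proof -
    from Rf[OF d] have Rc: "Rf \<delta> \<in> carrier_mat n n" and NR: "N \<delta> * Rf \<delta> = 1\<^sub>m n"
      and RN: "Rf \<delta> * N \<delta> = 1\<^sub>m n" by blast+
    have [simp]: "dim_row (Rf \<delta>) = n" "dim_col (Rf \<delta>) = n" using carrier_matD[OF Rc] by simp_all
    have [simp]: "dim_row (M \<delta>) = n" "dim_col (M \<delta>) = n" unfolding Meq by simp_all
    have a: "M \<delta> * (cadj kinv * Rf \<delta> * cadj k) = 1\<^sub>m n"
      unfolding Meq by (simp add: mult_ext[OF NR] c1 c2)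
    have b: "(cadj kinv * Rf \<delta> * cadj k) * M \<delta> = 1\<^sub>m n"
      unfolding Meq by (simp add: mult_ext[OF RN] c1 c2)
    have "minv (M \<delta>) = cadj kinv * Rf \<delta> * cadj k" by (rule minv_eq[OF _ _ _ _ a b]) simp_all
    moreover have "invertible_mat (M \<delta>)"
      unfolding invertible_mat_def inverts_mat_def using a b by (intro conjI exI[of _ "cadj kinv * Rf \<delta> * cadj k"]) simp_all
    ultimately show ?thesis by simp
  qed
  have lim: "((\<lambda>\<delta>::real. (minv (M \<delta>) * cadj X) $$ (i,j)) \<longlongrightarrow> Z $$ (i,j)) (at_right 0)"
    if i: "i < n" and j: "j < n" for i j
  proof -
    have core: "((\<lambda>\<delta>. (Rf \<delta> * cadj Y) $$ (a,b)) \<longlongrightarrow> Yp $$ (a,b)) (at_right 0)"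
      if "a < n" "b < n" for a b
      by (rule lim_core[OF conj_abs _ _ mpY Rf[unfolded N_def] that]) simp_all
    have t1: "((\<lambda>\<delta>. \<Sum>a<n. cadj kinv $$ (i,a) * (\<Sum>b<n. (Rf \<delta> * cadj Y) $$ (a,b) * kinv $$ (b,j)))
       \<longlongrightarrow> (\<Sum>a<n. cadj kinv $$ (i,a) * (\<Sum>b<n. Yp $$ (a,b) * kinv $$ (b,j)))) (at_right 0)"
      by (intro tendsto_sum tendsto_mult tendsto_const core) auto
    have e2: "(\<Sum>a<n. cadj kinv $$ (i,a) * (\<Sum>b<n. Yp $$ (a,b) * kinv $$ (b,j))) = Z $$ (i,j)"
      unfolding Z_def by (rule entry3[symmetric]) (simp_all add: i j)
    have ev3: "\<forall>\<^sub>F \<delta> in at_right 0. (\<Sum>a<n. cadj kinv $$ (i,a) * (\<Sum>b<n. (Rf \<delta> * cadj Y) $$ (a,b) * kinv $$ (b,j)))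
        = (minv (M \<delta>) * cadj X) $$ (i,j)"
      using eventually_at_right_less[of "0::real"]
    proof eventually_elim
      case (elim \<delta>)
      from Rf[OF elim] have Rc: "Rf \<delta> \<in> carrier_mat n n" by blast
      have [simp]: "dim_row (Rf \<delta>) = n" "dim_col (Rf \<delta>) = n" using carrier_matD[OF Rc] by simp_all
      have H: "minv (M \<delta>) * cadj X = cadj kinv * (Rf \<delta> * cadj Y) * kinv"
        unfolding Minv[OF elim, THEN conjunct1] cX by (simp add: c2)
      show ?case unfolding H by (rule entry3[symmetric]) (simp_all add: i j)
    qed
    show ?thesis using Lim_transform_eventually[OF t1[unfolded e2] ev3] .
  qed
  show ?thesis
    unfolding Y_def[symmetric] Ypeq Z_def[symmetric]
  proof (intro conjI)
    show "mp_inverse (cadj (Jmat n) * X * Jmat n) \<in> Smats (Suc n)" unfolding Teq by (rule S)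
    show "is_circ_mp_inverse n X Z" by (rule circ)
    show "mp_inverse (cadj (Jmat n) * X * Jmat n) = cadj (Jmat n) * Z * Jmat n" by (rule Teq)
    show "\<forall>\<delta>>0. invertible_mat (cadj X * Kmat n * X * Kmat n + of_real \<delta> \<cdot>\<^sub>m 1\<^sub>m n)"
    proof (intro allI impI)
      fix \<delta> :: real assume "\<delta> > 0"
      from Minv[OF this] show "invertible_mat (cadj X * Kmat n * X * Kmat n + of_real \<delta> \<cdot>\<^sub>m 1\<^sub>m n)"
        unfolding M_def by simp
    qed
    have Zc: "Z \<in> carrier_mat n n" by (intro carrier_matI) simp_all
    show "\<exists>L\<in>carrier_mat n n. (\<forall>i<n. \<forall>j<n. ((\<lambda>\<delta>. (minv (cadj X * Kmat n * X * Kmat n + of_real \<delta> \<cdot>\<^sub>m 1\<^sub>m n) * cadj X) $$ (i, j)) \<longlongrightarrow> L $$ (i, j)) (at_right 0)) \<and>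
      mp_inverse (cadj (Jmat n) * X * Jmat n) = cadj (Jmat n) * L * Jmat n"
      using lim[unfolded M_def] Teq Zc by blast
  qed
qed


end
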